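(* Let $G$ be a crown-free linear $3$-graph on $n$ vertices, and let $s$ be the number of vertices of $G$ of degree at least $6$. Then the number of edges of $G$ satisfies $$|E(G)| \leq \frac{3(n-s)}{2}.$$
   Context: A linear $3$-graph $G=(V,E)$ consists of a finite vertex set $V$ and a collection $E$ of $3$-element subsets of $V$ (edges) such that any two distinct edges share at most one vertex. The degree $d(v)$ of a vertex $v$ is the number of edges containing $v$. The crown $C_{13}$ is the linear $3$-graph on $9$ vertices $\{a,b,c,d,e,f,g,h,i\}$ with edges $\{a,b,c\},\{a,d,e\},\{b,f,g\},\{c,h,i\}$. A linear $3$-graph is crown-free if it contains no copy of $C_{13}$, i.e. no four of its edges together with an injective assignment of the nine vertices form the crown. *)

theory Defs
  imports Complex_Main
begin

definition linear_3graph :: "'a set \<Rightarrow> 'a set set \<Rightarrow> bool" where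
  "linear_3graph V E \<longleftrightarrow> finite V \<and>
     (\<forall>e\<in>E. e \<subseteq> V \<and> card e = 3) \<and>
     (\<forall>e\<in>E. \<forall>f\<in>E. e \<noteq> f \<longrightarrow> card (e \<inter> f) \<le> 1)"

definition degree :: "'a set set \<Rightarrow> 'a \<Rightarrow> nat" where
  "degree E v = card {e \<in> E. v \<in> e}"

definition has_crown :: "'a set \<Rightarrow> 'a set set \<Rightarrow> bool" where
  "has_crown V E \<longleftrightarrow> (\<exists>a b c d e f g h i.
     distinct [a, b, c, d, e, f, g, h, i] \<and>
     {a, b, c} \<in> E \<and> {a, d, e} \<in> E \<and> {b, f, g} \<in> E \<and> {c, h, i} \<in> E)"

definition crown_free :: "'a set \<Rightarrow> 'a set set \<Rightarrow> bool" where
  "crown_free V E \<longleftrightarrow> \<not> has_crown V E"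

end

theory Submission
  imports Defs
begin

lemma card3_distinct: "card {x, y, z} = 3 \<Longrightarrow> x \<noteq> y \<and> x \<noteq> z \<and> y \<noteq> z"
  by (auto simp: card_insert_if split: if_splits)

lemma crownI:
  assumes "distinct [a, b, c, d, e, f, g, h, i]"
    and "{a, b, c} \<in> E" "{a, d, e} \<in> E" "{b, f, g} \<in> E" "{c, h, i} \<in> E"
  shows "has_crown V E"
  unfolding has_crown_def using assms by blast

locale L =
  fixes V :: "'a set" and E :: "'a set set"
  assumes lin3: "linear_3graph V E"
begin

lemma finV: "finite V" using lin3 unfolding linear_3graph_def by blast

lemma sub: "f \<in> E \<Longrightarrow> f \<subseteq> V" using lin3 unfolding linear_3graph_def by blast

lemma finE: "finite E"
proof -
  have "E \<subseteq> Pow V" using sub by blast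
  thus ?thesis using finite_subset finV by (metis finite_Pow_iff)
qed

lemma card3: "f \<in> E \<Longrightarrow> card f = 3" using lin3 unfolding linear_3graph_def by blast

lemma finf: "f \<in> E \<Longrightarrow> finite f" using card3 by (intro card_ge_0_finite) simp

lemma lin:
  assumes "e \<in> E" "f \<in> E" "x \<in> e" "y \<in> e" "x \<in> f" "y \<in> f" "x \<noteq> y"
  shows "e = f"
proof (rule ccontr)
  assume "e \<noteq> f"
  hence c1: "card (e \<inter> f) \<le> 1" using lin3 assms(1,2) unfolding linear_3graph_def by blast
  have c2: "{x, y} \<subseteq> e \<inter> f" using assms by blast
  have c3: "finite (e \<inter> f)" using finf assms(1) by blast
  have "card {x, y} \<le> 1" using card_mono[OF c3 c2] c1 by linarith
  thus False using assms(7) by simp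
qed

lemma edist: "{x, y, z} \<in> E \<Longrightarrow> x \<noteq> y \<and> x \<noteq> z \<and> y \<noteq> z"
  by (rule card3_distinct[OF card3])

lemma decomp:
  assumes "f \<in> E" "z \<in> f"
  obtains x y where "f = {z, x, y}" "z \<noteq> x" "z \<noteq> y" "x \<noteq> y"
proof -
  have "card (f - {z}) = 2" using card3[OF assms(1)] assms(2) finf[OF assms(1)] by simp
  then obtain x y where xy: "f - {z} = {x, y}" "x \<noteq> y" by (meson card_2_iff)
  have h1: "f = {z, x, y}"
  proof -
    have "f = insert z (f - {z})" using insert_Diff[OF assms(2)] by simp
    also have "\<dots> = {z, x, y}" using xy(1) by simp
    finally show ?thesis .
  qed
  have "x \<in> f - {z}" "y \<in> f - {z}" using xy(1) by simp_all
  hence h2: "z \<noteq> x" "z \<noteq> y" by auto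
  show ?thesis by (rule that[OF h1 h2 xy(2)])
qed

lemma avoid:
  assumes "finite F" "finite T" "z \<notin> T" "card F + card T < degree E z"
  shows "\<exists>f\<in>E. z \<in> f \<and> f \<notin> F \<and> f \<inter> T = {}"
proof (rule ccontr)
  assume "\<not> ?thesis"
  hence s1: "{f \<in> E. z \<in> f} \<subseteq> F \<union> (\<Union>t\<in>T. {f \<in> E. z \<in> f \<and> t \<in> f})"
    by (auto simp: disjoint_iff)
  have s2: "finite (F \<union> (\<Union>t\<in>T. {f \<in> E. z \<in> f \<and> t \<in> f}))"
    using assms(1,2) finE by auto
  have d1: "degree E z \<le> card (F \<union> (\<Union>t\<in>T. {f \<in> E. z \<in> f \<and> t \<in> f}))"
    unfolding degree_def using card_mono[OF s2 s1] .
  have d2: "card (F \<union> (\<Union>t\<in>T. {f \<in> E. z \<in> f \<and> t \<in> f})) \<le> card F + card (\<Union>t\<in>T. {f \<in> E. z \<in> f \<and> t \<in> f})" by (rule card_Un_le)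
  have d3: "card (\<Union>t\<in>T. {f \<in> E. z \<in> f \<and> t \<in> f}) \<le> (\<Sum>t\<in>T. card {f \<in> E. z \<in> f \<and> t \<in> f})"
    using assms(2) by (rule card_UN_le)
  have d4: "(\<Sum>t\<in>T. card {f \<in> E. z \<in> f \<and> t \<in> f}) \<le> (\<Sum>t\<in>T. 1)"
  proof (rule sum_mono)
    fix t assume "t \<in> T"
    hence "z \<noteq> t" using assms(3) by blast
    have "finite {f \<in> E. z \<in> f \<and> t \<in> f}" using finE by simp
    moreover have "\<forall>f1\<in>{f \<in> E. z \<in> f \<and> t \<in> f}. \<forall>f2\<in>{f \<in> E. z \<in> f \<and> t \<in> f}. f1 = f2"
    proof (intro ballI)
      fix f1 f2 assume "f1 \<in> {f \<in> E. z \<in> f \<and> t \<in> f}" "f2 \<in> {f \<in> E. z \<in> f \<and> t \<in> f}"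
      thus "f1 = f2" using lin[of f1 f2 z t] \<open>z \<noteq> t\<close> by blast
    qed
    ultimately show "card {f \<in> E. z \<in> f \<and> t \<in> f} \<le> 1"
      by (simp only: One_nat_def card_le_Suc0_iff_eq)
  qed
  have "(\<Sum>t\<in>T. (1::nat)) = card T" by simp
  thus False using d1 d2 d3 d4 assms(4) by linarith
qed

end


context L
begin

lemma card3le: "card {x, y, z} \<le> 3"
  by (simp add: card_insert_if)

lemma card2le: "card {x, y} \<le> 2"
  by (simp add: card_insert_if)

lemma meet1: "e \<in> E \<Longrightarrow> f \<in> E \<Longrightarrow> e \<noteq> f \<Longrightarrow> z \<in> e \<Longrightarrow> z \<in> f \<Longrightarrow> w \<in> e \<Longrightarrow> w \<in> f \<Longrightarrow> w = z"
  using lin by metis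

lemma leg_out:
  assumes "{z1, z2, z3} \<in> E" "{z1, p, q} \<in> E" "{z1, p, q} \<noteq> {z1, z2, z3}"
  shows "p \<noteq> z1 \<and> p \<noteq> z2 \<and> p \<noteq> z3 \<and> q \<noteq> z1 \<and> q \<noteq> z2 \<and> q \<noteq> z3 \<and> p \<noteq> q"
proof -
  have d: "z1 \<noteq> p" "z1 \<noteq> q" "p \<noteq> q" using edist[OF assms(2)] by auto
  have "p \<notin> {z1, z2, z3}"
  proof
    assume "p \<in> {z1, z2, z3}"
    hence "p = z1" using meet1[OF assms(1) assms(2) assms(3)[symmetric], of z1 p] by simp
    thus False using d by simp
  qed
  moreover have "q \<notin> {z1, z2, z3}"
  proof
    assume "q \<in> {z1, z2, z3}"
    hence "q = z1" using meet1[OF assms(1) assms(2) assms(3)[symmetric], of z1 q] by simp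
    thus False using d by simp
  qed
  ultimately show ?thesis using d by simp
qed

lemma getleg:
  assumes "finite F" "finite T" "z \<notin> T" "card F + card T < degree E z"
  obtains m m' where "{z, m, m'} \<in> E" "{z, m, m'} \<notin> F" "m \<notin> T" "m' \<notin> T"
proof -
  obtain f where f: "f \<in> E" "z \<in> f" "f \<notin> F" "f \<inter> T = {}" using avoid[OF assms] by blast
  obtain m m' where mm: "f = {z, m, m'}" "z \<noteq> m" "z \<noteq> m'" "m \<noteq> m'" using decomp[OF f(1,2)] by blast
  show ?thesis using that[of m m'] f mm by blast
qed

end

locale C = L +
  assumes nc: "\<not> has_crown V E"

context C
begin

lemma cover:
  assumes e0: "{z1, z2, z3} \<in> E" and dz: "z1 \<noteq> z2" "z1 \<noteq> z3" "z2 \<noteq> z3"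
    and d1: "degree E z1 \<ge> 4" and d3: "degree E z3 \<ge> 5"
    and ux: "{z2, u, x} \<in> E" and u: "u \<noteq> z1" "u \<noteq> z2" "u \<noteq> z3"
  shows "\<exists>y. {z3, u, y} \<in> E"
proof (rule ccontr)
  assume nu: "\<not> (\<exists>y. {z3, u, y} \<in> E)"
  have e0': "{z2, z1, z3} \<in> E" "{z3, z1, z2} \<in> E" using e0 by (simp_all add: insert_commute)
  have "{z2, u, x} \<noteq> {z2, z1, z3}" using u by auto
  hence x: "x \<noteq> z1" "x \<noteq> z2" "x \<noteq> z3" "u \<noteq> x" using leg_out[OF e0'(1) ux] by auto
  obtain w w' where w: "{z1, w, w'} \<in> E" "{z1, w, w'} \<notin> {{z1, z2, z3}}" "w \<notin> {u, x}" "w' \<notin> {u, x}"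
  proof (rule getleg[of "{{z1, z2, z3}}" "{u, x}" z1])
    show "card {{z1, z2, z3}} + card {u, x} < degree E z1"
      using d1 card2le[of u x] by simp
  qed (use u x in auto)
  have wo: "w \<noteq> z1 \<and> w \<noteq> z2 \<and> w \<noteq> z3 \<and> w' \<noteq> z1 \<and> w' \<noteq> z2 \<and> w' \<noteq> z3 \<and> w \<noteq> w'"
    using leg_out[OF e0 w(1)] w(2) by simp
  obtain h h' where h: "{z3, h, h'} \<in> E" "{z3, h, h'} \<notin> {{z1, z2, z3}}" "h \<notin> {x, w, w'}" "h' \<notin> {x, w, w'}"
  proof (rule getleg[of "{{z1, z2, z3}}" "{x, w, w'}" z3])
    have "card {x, w, w'} \<le> 3" by (rule card3le)
    thus "card {{z1, z2, z3}} + card {x, w, w'} < degree E z3"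
      using d3 by simp
  qed (use x wo in auto)
  have "{z3, h, h'} \<noteq> {z3, z1, z2}" using h(2) by (auto simp: insert_commute)
  hence ho: "h \<noteq> z1 \<and> h \<noteq> z2 \<and> h \<noteq> z3 \<and> h' \<noteq> z1 \<and> h' \<noteq> z2 \<and> h' \<noteq> z3 \<and> h \<noteq> h'"
    using leg_out[OF e0'(2) h(1)] by simp
  have hu: "h \<noteq> u" "h' \<noteq> u"
  proof -
    show "h \<noteq> u" using nu h(1) by blast
    show "h' \<noteq> u" using nu h(1) by (metis insert_commute)
  qed
  have "distinct [z1, z2, z3, w, w', u, x, h, h']"
    using dz wo x u ho hu w(3,4) h(3,4) by auto
  hence "has_crown V E" using crownI[of z1 z2 z3 w w' u x h h' E V] e0 w(1) ux h(1) by blast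
  thus False using nc by blast
qed


lemma kk:
  assumes e0: "{z1, z2, z3} \<in> E" and dz: "z1 \<noteq> z2" "z1 \<noteq> z3" "z2 \<noteq> z3"
    and d2: "degree E z2 \<ge> 5"
    and pq: "{z1, p, q} \<in> E" and px: "{z2, p, x} \<in> E" and xr: "{z3, x, r} \<in> E"
    and p: "p \<noteq> z1" "p \<noteq> z2" "p \<noteq> z3"
  shows "r = q"
proof (rule ccontr)
  assume rq: "r \<noteq> q"
  have e0': "{z2, z1, z3} \<in> E" "{z3, z1, z2} \<in> E" using e0 by (simp_all add: insert_commute)
  have "{z1, p, q} \<noteq> {z1, z2, z3}" using p by auto
  hence q: "q \<noteq> z1" "q \<noteq> z2" "q \<noteq> z3" "p \<noteq> q" using leg_out[OF e0 pq] by auto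
  have "{z2, p, x} \<noteq> {z2, z1, z3}" using p by auto
  hence x: "x \<noteq> z1" "x \<noteq> z2" "x \<noteq> z3" "p \<noteq> x" using leg_out[OF e0'(1) px] by auto
  have "{z3, x, r} \<noteq> {z3, z1, z2}" using x by auto
  hence r: "r \<noteq> z1" "r \<noteq> z2" "r \<noteq> z3" "x \<noteq> r" using leg_out[OF e0'(2) xr] by auto
  have xq: "x \<noteq> q"
  proof
    assume "x = q"
    hence eq: "{z1, p, q} = {z2, p, x}" using lin[OF pq px, of p q] q by simp
    have "z1 \<in> {z1, p, q}" by simp
    hence "z1 \<in> {z2, p, x}" by (simp only: eq)
    thus False using dz p x by simp
  qed
  have rp: "r \<noteq> p"
  proof
    assume "r = p"
    hence eq: "{z3, x, r} = {z2, p, x}" using lin[OF xr px, of x p] x by simp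
    have "z3 \<in> {z3, x, r}" by simp
    hence "z3 \<in> {z2, p, x}" by (simp only: eq)
    thus False using dz p x by simp
  qed
  obtain m m' where m: "{z2, m, m'} \<in> E" "{z2, m, m'} \<notin> {{z1, z2, z3}, {z2, p, x}}" "m \<notin> {q, r}" "m' \<notin> {q, r}"
  proof (rule getleg[of "{{z1, z2, z3}, {z2, p, x}}" "{q, r}" z2])
    show "card {{z1, z2, z3}, {z2, p, x}} + card {q, r} < degree E z2"
      using d2 card2le[of q r] card2le[of "{z1, z2, z3}" "{z2, p, x}"] by simp
  qed (use q r in auto)
  have "{z2, m, m'} \<noteq> {z2, z1, z3}" using m(2) by (auto simp: insert_commute)
  hence mo: "m \<noteq> z1 \<and> m \<noteq> z2 \<and> m \<noteq> z3 \<and> m' \<noteq> z1 \<and> m' \<noteq> z2 \<and> m' \<noteq> z3 \<and> m \<noteq> m'"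
    using leg_out[OF e0'(1) m(1)] by simp
  have mp: "m \<noteq> p" "m' \<noteq> p" "m \<noteq> x" "m' \<noteq> x"
  proof -
    have ne: "{z2, m, m'} \<noteq> {z2, p, x}" using m(2) by simp
    show "m \<noteq> p" using lin[OF m(1) px, of z2 m] ne mo by auto
    show "m' \<noteq> p" using lin[OF m(1) px, of z2 m'] ne mo by auto
    show "m \<noteq> x" using lin[OF m(1) px, of z2 m] ne mo by auto
    show "m' \<noteq> x" using lin[OF m(1) px, of z2 m'] ne mo by auto
  qed
  have "distinct [z2, p, x, m, m', z1, q, z3, r]"
    using dz p q x r xq rp rq mo mp m(3,4) by auto
  moreover have "{p, z1, q} \<in> E" "{x, z3, r} \<in> E" using pq xr by (simp_all add: insert_commute)
  ultimately have "has_crown V E" using crownI[of z2 p x m m' z1 q z3 r E V] px m(1) by blast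
  thus False using nc by blast
qed


lemma card4le: "card {x, y, z, w} \<le> 4"
  by (simp add: card_insert_if)

lemma big:
  assumes e0: "{a, b, c} \<in> E" and dz: "a \<noteq> b" "a \<noteq> c" "b \<noteq> c"
    and da: "degree E a \<ge> 6" and db: "degree E b \<ge> 4" and dc: "degree E c \<ge> 2"
  shows False
proof -
  have e0': "{b, a, c} \<in> E" "{c, a, b} \<in> E" using e0 by (simp_all add: insert_commute)
  obtain h h' where h: "{c, h, h'} \<in> E" "{c, h, h'} \<notin> {{a, b, c}}" "h \<notin> {}" "h' \<notin> {}"
  proof (rule getleg[of "{{a, b, c}}" "{}" c])
    show "card {{a, b, c}} + card {} < degree E c" using dc by simp
  qed auto
  have "{c, h, h'} \<noteq> {c, a, b}" using h(2) by (auto simp: insert_commute)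
  hence ho: "h \<noteq> a \<and> h \<noteq> b \<and> h \<noteq> c \<and> h' \<noteq> a \<and> h' \<noteq> b \<and> h' \<noteq> c \<and> h \<noteq> h'"
    using leg_out[OF e0'(2) h(1)] by simp
  obtain m m' where m: "{b, m, m'} \<in> E" "{b, m, m'} \<notin> {{a, b, c}}" "m \<notin> {h, h'}" "m' \<notin> {h, h'}"
  proof (rule getleg[of "{{a, b, c}}" "{h, h'}" b])
    show "card {{a, b, c}} + card {h, h'} < degree E b" using db card2le[of h h'] by simp
  qed (use ho in auto)
  have "{b, m, m'} \<noteq> {b, a, c}" using m(2) by (auto simp: insert_commute)
  hence mo: "m \<noteq> a \<and> m \<noteq> b \<and> m \<noteq> c \<and> m' \<noteq> a \<and> m' \<noteq> b \<and> m' \<noteq> c \<and> m \<noteq> m'"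
    using leg_out[OF e0'(1) m(1)] by simp
  obtain w w' where w: "{a, w, w'} \<in> E" "{a, w, w'} \<notin> {{a, b, c}}" "w \<notin> {h, h', m, m'}" "w' \<notin> {h, h', m, m'}"
  proof (rule getleg[of "{{a, b, c}}" "{h, h', m, m'}" a])
    show "card {{a, b, c}} + card {h, h', m, m'} < degree E a" using da card4le[of h h' m m'] by simp
  qed (use ho mo in auto)
  have wo: "w \<noteq> a \<and> w \<noteq> b \<and> w \<noteq> c \<and> w' \<noteq> a \<and> w' \<noteq> b \<and> w' \<noteq> c \<and> w \<noteq> w'"
    using leg_out[OF e0 w(1)] w(2) by simp
  have "distinct [a, b, c, w, w', m, m', h, h']"
    using dz ho mo wo m(3,4) w(3,4) by auto
  hence "has_crown V E" using crownI[of a b c w w' m m' h h' E V] e0 w(1) m(1) h(1) by blast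
  thus False using nc by blast
qed

end


definition pt :: "'a set set \<Rightarrow> 'a \<Rightarrow> 'a \<Rightarrow> 'a" where
  "pt E z u = (THE v. {z, u, v} \<in> E)"

lemma neq_edge: "x \<in> A \<Longrightarrow> x \<notin> B \<Longrightarrow> A \<noteq> B" by blast

context L
begin

lemma pt_eq:
  assumes "{z, u, v} \<in> E"
  shows "pt E z u = v"
  unfolding pt_def
proof (rule the_equality)
  show "{z, u, v} \<in> E" by fact
  fix v' assume v': "{z, u, v'} \<in> E"
  have d: "z \<noteq> u" "z \<noteq> v" "u \<noteq> v" using edist[OF assms] by auto
  have d': "z \<noteq> v'" "u \<noteq> v'" using edist[OF v'] by auto
  have "{z, u, v'} = {z, u, v}" using lin[OF v' assms, of z u] d by simp
  hence "v' \<in> {z, u, v}" by blast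
  thus "v' = v" using d' by blast
qed

end

locale D = C +
  fixes a b c
  assumes e0: "{a, b, c} \<in> E" and dab: "a \<noteq> b" and dac: "a \<noteq> c" and dbc: "b \<noteq> c"
    and db: "degree E b = 5" and dc: "degree E c = 5" and da4: "degree E a \<ge> 4"
begin

definition N :: "'a \<Rightarrow> 'a set" where
  "N z = {u. (\<exists>v. {z, u, v} \<in> E) \<and> u \<noteq> a \<and> u \<noteq> b \<and> u \<noteq> c}"

lemma e0s: "{a, b, c} \<in> E" "{b, a, c} \<in> E" "{c, a, b} \<in> E"
  using e0 by (simp_all add: insert_commute)

lemma out0:
  assumes z: "z = a \<or> z = b \<or> z = c" and f: "{z, u, v} \<in> E" and u: "u \<noteq> a" "u \<noteq> b" "u \<noteq> c"
  shows "v \<noteq> a \<and> v \<noteq> b \<and> v \<noteq> c \<and> u \<noteq> v"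
proof -
  have d: "u \<noteq> v" using edist[OF f] by simp
  from z show ?thesis
  proof (elim disjE)
    assume "z = a"
    hence "{a, u, v} \<in> E" "{a, u, v} \<noteq> {a, b, c}" using f u by auto
    thus ?thesis using leg_out[OF e0s(1)] d by blast
  next
    assume "z = b"
    hence "{b, u, v} \<in> E" "{b, u, v} \<noteq> {b, a, c}" using f u by auto
    thus ?thesis using leg_out[OF e0s(2)] d by blast
  next
    assume "z = c"
    hence "{c, u, v} \<in> E" "{c, u, v} \<noteq> {c, a, b}" using f u by auto
    thus ?thesis using leg_out[OF e0s(3)] d by blast
  qed
qed

lemma ptN:
  assumes z: "z = a \<or> z = b \<or> z = c" and u: "u \<in> N z"
  shows "{z, u, pt E z u} \<in> E" "pt E z u \<in> N z" "pt E z (pt E z u) = u" "pt E z u \<noteq> u"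
    "pt E z u \<noteq> a" "pt E z u \<noteq> b" "pt E z u \<noteq> c" "u \<noteq> a" "u \<noteq> b" "u \<noteq> c"
proof -
  obtain v where v: "{z, u, v} \<in> E" and ua: "u \<noteq> a" "u \<noteq> b" "u \<noteq> c" using u unfolding N_def by blast
  have pv: "pt E z u = v" using pt_eq[OF v] .
  have vo: "v \<noteq> a \<and> v \<noteq> b \<and> v \<noteq> c \<and> u \<noteq> v" using out0[OF z v ua] .
  have v': "{z, v, u} \<in> E" using v by (simp add: insert_commute)
  show "{z, u, pt E z u} \<in> E" using v pv by simp
  show "pt E z u \<in> N z" using v' vo pv unfolding N_def by blast
  show "pt E z (pt E z u) = u" using pt_eq[OF v'] pv by simp
  show "pt E z u \<noteq> u" "pt E z u \<noteq> a" "pt E z u \<noteq> b" "pt E z u \<noteq> c" using vo pv by auto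
  show "u \<noteq> a" "u \<noteq> b" "u \<noteq> c" by fact+
qed

lemma inN: "{z, u, v} \<in> E \<Longrightarrow> u \<noteq> a \<Longrightarrow> u \<noteq> b \<Longrightarrow> u \<noteq> c \<Longrightarrow> u \<in> N z"
  unfolding N_def by blast

lemma NbNc: "u \<in> N b \<Longrightarrow> u \<in> N c"
proof -
  assume u: "u \<in> N b"
  obtain v where v: "{b, u, v} \<in> E" and ua: "u \<noteq> a" "u \<noteq> b" "u \<noteq> c" using u unfolding N_def by blast
  have "\<exists>y. {c, u, y} \<in> E" using cover[OF e0 dab dac dbc da4 _ v ua] dc by simp
  thus ?thesis using ua unfolding N_def by blast
qed

lemma NcNb: "u \<in> N c \<Longrightarrow> u \<in> N b"
proof -
  assume u: "u \<in> N c"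
  obtain v where v: "{c, u, v} \<in> E" and ua: "u \<noteq> a" "u \<noteq> b" "u \<noteq> c" using u unfolding N_def by blast
  have e: "{a, c, b} \<in> E" using e0 by (simp add: insert_commute)
  have "\<exists>y. {b, u, y} \<in> E" using cover[OF e dac dab dbc[symmetric] da4 _ v] ua db by simp
  thus ?thesis using ua unfolding N_def by blast
qed

lemma NaNb: "u \<in> N a \<Longrightarrow> u \<in> N b"
proof -
  assume u: "u \<in> N a"
  obtain v where v: "{a, u, v} \<in> E" and ua: "u \<noteq> a" "u \<noteq> b" "u \<noteq> c" using u unfolding N_def by blast
  have e: "{c, a, b} \<in> E" using e0 by (simp add: insert_commute)
  have "\<exists>y. {b, u, y} \<in> E" using cover[OF e dac[symmetric] dbc[symmetric] dab _ _ v] ua db dc by simp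
  thus ?thesis using ua unfolding N_def by blast
qed

end


context D
begin

abbreviation "sg \<equiv> pt E b"
abbreviation "tu \<equiv> pt E c"
abbreviation "rh \<equiv> pt E a"

lemma zs: "a = a \<or> a = b \<or> a = c" "b = a \<or> b = b \<or> b = c" "c = a \<or> c = b \<or> c = c" by simp_all

lemma X: assumes "u \<in> N b"
  shows "{b, u, sg u} \<in> E" "sg u \<in> N b" "sg (sg u) = u" "sg u \<noteq> u"
    "sg u \<noteq> a" "sg u \<noteq> b" "sg u \<noteq> c" "u \<noteq> a" "u \<noteq> b" "u \<noteq> c"
    "u \<in> N c" "{c, u, tu u} \<in> E" "tu u \<in> N c" "tu u \<in> N b" "tu (tu u) = u" "tu u \<noteq> u"
    "tu u \<noteq> a" "tu u \<noteq> b" "tu u \<noteq> c" "sg u \<in> N c"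
  using ptN[OF zs(2) assms] ptN[OF zs(3) NbNc[OF assms]] NcNb[OF ptN(2)[OF zs(3) NbNc[OF assms]]]
    NbNc[OF ptN(2)[OF zs(2) assms]] NbNc[OF assms] by auto

lemma XA: assumes "u \<in> N a"
  shows "{a, u, rh u} \<in> E" "rh u \<in> N a" "rh (rh u) = u" "rh u \<noteq> u"
    "rh u \<noteq> a" "rh u \<noteq> b" "rh u \<noteq> c" "u \<in> N b" "rh u \<in> N b"
  using ptN[OF zs(1) assms] NaNb[OF assms] NaNb[OF ptN(2)[OF zs(1) assms]] by auto

lemma sgtu: assumes "u \<in> N b" shows "sg u \<noteq> tu u"
proof
  assume eq: "sg u = tu u"
  have "{b, u, sg u} = {c, u, tu u}" using lin[OF X(1)[OF assms] X(12)[OF assms], of u "sg u"] eq X(4)[OF assms] by simp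
  hence "c \<in> {b, u, sg u}" by blast
  thus False using X[OF assms] dbc by auto
qed

lemma R1: assumes "u \<in> N b" "u \<in> N a" shows "tu (sg u) = rh u"
  using kk[OF e0 dab dac dbc _ XA(1)[OF assms(2)] X(1)[OF assms(1)] X(12)[OF X(2)[OF assms(1)]]]
    db X(8-10)[OF assms(1)] by simp

lemma R2: assumes "u \<in> N b" "u \<in> N a" shows "sg (tu u) = rh u"
proof -
  have e: "{a, c, b} \<in> E" using e0 by (simp add: insert_commute)
  show ?thesis
    using kk[OF e dac dab dbc[symmetric] _ XA(1)[OF assms(2)] X(12)[OF assms(1)] X(1)[OF X(14)[OF assms(1)]]]
      dc X(8-10)[OF assms(1)] by simp
qed

lemma R3: assumes "u \<in> N b" "sg u \<in> N a" shows "rh (sg u) = tu u"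
proof -
  have e: "{c, b, a} \<in> E" using e0 by (simp add: insert_commute)
  show ?thesis
    using kk[OF e dbc[symmetric] dac[symmetric] dab[symmetric] _ X(12)[OF assms(1)] X(1)[OF assms(1)] XA(1)[OF assms(2)]]
      db X(8-10)[OF assms(1)] by simp
qed

lemma R4: assumes "u \<in> N b" "tu u \<in> N a" shows "rh (tu u) = sg u"
proof -
  have e: "{b, c, a} \<in> E" using e0 by (simp add: insert_commute)
  show ?thesis
    using kk[OF e dbc dab[symmetric] dac[symmetric] _ X(1)[OF assms(1)] X(12)[OF assms(1)] XA(1)[OF assms(2)]]
      dc X(8-10)[OF assms(1)] by simp
qed

end


context D
begin

lemma out1:
  assumes z: "z = a \<or> z = b \<or> z = c" and f: "{z, x, y} \<in> E" and ne: "{z, x, y} \<noteq> {a, b, c}"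
  shows "x \<noteq> a \<and> x \<noteq> b \<and> x \<noteq> c"
proof -
  from z show ?thesis
  proof (elim disjE)
    assume "z = a" thus ?thesis using leg_out[OF e0s(1), of x y] f ne by simp
  next
    assume "z = b"
    moreover have "{b, a, c} = {a, b, c}" by (simp add: insert_commute)
    ultimately show ?thesis using leg_out[OF e0s(2), of x y] f ne by simp
  next
    assume "z = c"
    moreover have "{c, a, b} = {a, b, c}" by (simp add: insert_commute)
    ultimately show ?thesis using leg_out[OF e0s(3), of x y] f ne by simp
  qed
qed

lemma cardN:
  assumes z: "z = a \<or> z = b \<or> z = c"
  shows "card (N z) = 2 * (degree E z - 1)"
proof -
  define Fz where "Fz = {f \<in> E. z \<in> f} - {{a, b, c}}"
  have ze: "z \<in> {a, b, c}" using z by blast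
  have NU: "N z = (\<Union>f\<in>Fz. f - {z})"
  proof
    show "N z \<subseteq> (\<Union>f\<in>Fz. f - {z})"
    proof
      fix u assume "u \<in> N z"
      then obtain v where v: "{z, u, v} \<in> E" and ua: "u \<noteq> a" "u \<noteq> b" "u \<noteq> c" unfolding N_def by blast
      have "{z, u, v} \<in> Fz" unfolding Fz_def using v ua by auto
      moreover have "u \<in> {z, u, v} - {z}" using z ua by auto
      ultimately show "u \<in> (\<Union>f\<in>Fz. f - {z})" by blast
    qed
  next
    show "(\<Union>f\<in>Fz. f - {z}) \<subseteq> N z"
    proof
      fix u assume "u \<in> (\<Union>f\<in>Fz. f - {z})"
      then obtain f where f: "f \<in> Fz" "u \<in> f" "u \<noteq> z" by blast
      have fE: "f \<in> E" "z \<in> f" "f \<noteq> {a, b, c}" using f(1) unfolding Fz_def by auto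
      obtain x y where xy: "f = {z, x, y}" "z \<noteq> x" "z \<noteq> y" "x \<noteq> y" using decomp[OF fE(1,2)] by blast
      have f1: "{z, x, y} \<in> E" "{z, x, y} \<noteq> {a, b, c}" using fE xy by auto
      have f2: "{z, y, x} \<in> E" "{z, y, x} \<noteq> {a, b, c}" using f1 by (simp_all add: insert_commute)
      have "u = x \<or> u = y" using f(2,3) xy(1) by blast
      thus "u \<in> N z"
      proof
        assume "u = x" thus ?thesis using inN[OF f1(1)] out1[OF z f1] by blast
      next
        assume "u = y" thus ?thesis using inN[OF f2(1)] out1[OF z f2] by blast
      qed
    qed
  qed
  have finFz: "finite Fz" unfolding Fz_def using finE by simp
  have c2: "\<And>f. f \<in> Fz \<Longrightarrow> card (f - {z}) = 2"
  proof -
    fix f assume "f \<in> Fz"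
    hence "f \<in> E" "z \<in> f" unfolding Fz_def by auto
    thus "card (f - {z}) = 2" using card3 finf by simp
  qed
  have disj: "\<forall>f\<in>Fz. \<forall>g\<in>Fz. f \<noteq> g \<longrightarrow> (f - {z}) \<inter> (g - {z}) = {}"
  proof (intro ballI impI)
    fix f g assume fg: "f \<in> Fz" "g \<in> Fz" "f \<noteq> g"
    hence fgE: "f \<in> E" "g \<in> E" "z \<in> f" "z \<in> g" unfolding Fz_def by auto
    show "(f - {z}) \<inter> (g - {z}) = {}"
    proof (rule ccontr)
      assume "(f - {z}) \<inter> (g - {z}) \<noteq> {}"
      then obtain w where w: "w \<in> f" "w \<in> g" "w \<noteq> z" by blast
      have "f = g" using lin[OF fgE(1,2) fgE(3) w(1) fgE(4) w(2)] w(3) by blast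
      thus False using fg(3) by blast
    qed
  qed
  have "card (N z) = (\<Sum>f\<in>Fz. card (f - {z}))"
    unfolding NU by (rule card_UN_disjoint[OF finFz]) (use finFz finf disj in \<open>auto simp: Fz_def\<close>)
  also have "\<dots> = (\<Sum>f\<in>Fz. 2)" using c2 by simp
  also have "\<dots> = 2 * card Fz" by simp
  also have "card Fz = degree E z - 1"
  proof -
    have "{a, b, c} \<in> {f \<in> E. z \<in> f}" using e0 ze by blast
    thus ?thesis unfolding Fz_def degree_def using finE by (simp add: card_Diff_singleton)
  qed
  finally show ?thesis .
qed

lemma cardNb: "card (N b) = 8" using cardN[OF zs(2)] db by simp

lemma cardNa: "card (N a) \<ge> 6" using cardN[OF zs(1)] da4 by simp

lemma finNb: "finite (N b)" using cardNb by (intro card_ge_0_finite) simp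

lemma NaNb': "N a \<subseteq> N b" using NaNb by blast

lemma Cnt: assumes u: "u \<in> N b" and n: "u \<notin> N a" "sg u \<notin> N a" "tu u \<notin> N a" shows False
proof -
  have sub1: "N a \<subseteq> N b - {u, sg u, tu u}" using NaNb' n by blast
  have sub2: "{u, sg u, tu u} \<subseteq> N b" using X[OF u] u by blast
  have c3: "card {u, sg u, tu u} = 3" using X(4,16)[OF u] sgtu[OF u] by (auto simp: card_insert_if)
  have "card (N b - {u, sg u, tu u}) = 5" using card_Diff_subset[OF _ sub2] cardNb c3 by simp
  hence "card (N a) \<le> 5" using card_mono[OF _ sub1] finNb by (metis finite_Diff)
  thus False using cardNa by simp
qed

end


context D
begin

definition ph :: "'a \<Rightarrow> 'a" where "ph u = tu (sg u)"

lemma A1: "u \<in> N b \<Longrightarrow> sg u \<in> N a \<Longrightarrow> tu u \<in> N a"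
  using R3 XA(2) by metis

lemma A2: "u \<in> N b \<Longrightarrow> tu u \<in> N a \<Longrightarrow> sg u \<in> N a"
  using R4 XA(2) by metis

lemma A3: "u \<in> N b \<Longrightarrow> u \<notin> N a \<Longrightarrow> sg u \<in> N a \<and> tu u \<in> N a"
  using Cnt A1 A2 by blast

lemma R5: assumes u: "u \<in> N b" shows "sg (tu u) = tu (sg u)"
proof (cases "u \<in> N a")
  case True thus ?thesis using R1[OF u True] R2[OF u True] by simp
next
  case False
  have s: "sg u \<in> N a" using A3[OF u False] by blast
  have su: "sg u \<in> N b" using X(2)[OF u] .
  have "sg (tu (sg u)) = tu u" using R2[OF su s] R3[OF u s] by simp
  hence "sg (sg (tu (sg u))) = sg (tu u)" by simp
  moreover have "sg (sg (tu (sg u))) = tu (sg u)" using X(3)[OF X(14)[OF su]] .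
  ultimately show ?thesis by simp
qed

lemma P: assumes u: "u \<in> N b"
  shows "ph u \<in> N b" "sg (ph u) = tu u" "tu (ph u) = sg u" "ph (ph u) = u"
    "ph u \<noteq> u" "ph u \<noteq> sg u" "ph u \<noteq> tu u" "ph (sg u) = tu u" "ph (tu u) = sg u"
    "sg (tu u) = ph u"
proof -
  have su: "sg u \<in> N b" using X(2)[OF u] .
  show p1: "ph u \<in> N b" unfolding ph_def using X(14)[OF su] .
  show p2: "sg (ph u) = tu u" unfolding ph_def using R5[OF su] X(3)[OF u] by simp
  show p3: "tu (ph u) = sg u" unfolding ph_def using X(15)[OF su] .
  show "ph (ph u) = u" using p2 X(15)[OF u] unfolding ph_def[of "ph u"] by simp
  show "ph u \<noteq> u"
  proof
    assume "ph u = u"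
    hence "tu (ph u) = tu u" by simp
    thus False using p3 sgtu[OF u] by simp
  qed
  show "ph u \<noteq> sg u" unfolding ph_def using X(16)[OF su] .
  show "ph u \<noteq> tu u"
  proof
    assume "ph u = tu u"
    hence "tu (ph u) = tu (tu u)" by simp
    thus False using p3 X(15)[OF u] X(4)[OF u] by simp
  qed
  show "ph (sg u) = tu u" unfolding ph_def using X(3)[OF u] by simp
  show "ph (tu u) = sg u" unfolding ph_def using R5[OF u] p3 unfolding ph_def by simp
  show "sg (tu u) = ph u" unfolding ph_def using R5[OF u] .
qed

lemma P6: "u \<in> N b \<Longrightarrow> u \<in> N a \<Longrightarrow> rh u = ph u"
  unfolding ph_def using R1 by simp

lemma P7: assumes u: "u \<in> N b" "u \<notin> N a" shows "ph u \<notin> N a"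
proof
  assume "ph u \<in> N a"
  hence "rh (ph u) = u" using P6[OF P(1)[OF u(1)]] P(4)[OF u(1)] by simp
  hence "u \<in> N a" using XA(2)[OF \<open>ph u \<in> N a\<close>] by simp
  thus False using u(2) by blast
qed

lemma P8: "u \<in> N b \<Longrightarrow> u \<notin> N a \<Longrightarrow> rh (tu u) = sg u"
  using R4 A3 by blast

lemma np:
  assumes f: "f \<in> E" "a \<notin> f" "b \<notin> f" "c \<notin> f" and u: "u \<in> N b" "u \<in> f" and w: "w \<in> f"
  shows "w \<noteq> sg u" "w \<noteq> tu u"
proof -
  show "w \<noteq> sg u"
  proof
    assume "w = sg u"
    hence "f = {b, u, sg u}" using lin[OF f(1) X(1)[OF u(1)] u(2) w] X(4)[OF u(1)] by auto
    thus False using f(3) by blast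
  qed
  show "w \<noteq> tu u"
  proof
    assume "w = tu u"
    hence "f = {c, u, tu u}" using lin[OF f(1) X(12)[OF u(1)] u(2) w] X(16)[OF u(1)] by auto
    thus False using f(4) by blast
  qed
qed

lemma notA:
  assumes f: "f \<in> E" "a \<notin> f" and v: "v \<in> N b" "v \<in> f" "ph v \<in> f"
  shows "v \<notin> N a"
proof
  assume va: "v \<in> N a"
  have "rh v = ph v" using P6[OF v(1) va] .
  hence "f = {a, v, rh v}" using lin[OF f(1) XA(1)[OF va] v(2) v(3)] P(5)[OF v(1)] by auto
  thus False using f(2) by blast
qed

lemma bleg:
  assumes "{b, m, m'} \<in> E" "{b, m, m'} \<noteq> {a, b, c}"
  shows "m \<noteq> a \<and> m \<noteq> b \<and> m \<noteq> c \<and> m' \<noteq> a \<and> m' \<noteq> b \<and> m' \<noteq> c \<and> m \<noteq> m' \<and> m \<in> N b \<and> m' \<in> N b"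
proof -
  have "{b, m, m'} \<noteq> {b, a, c}" using assms(2) by (simp add: insert_commute)
  hence o: "m \<noteq> a \<and> m \<noteq> b \<and> m \<noteq> c \<and> m' \<noteq> a \<and> m' \<noteq> b \<and> m' \<noteq> c \<and> m \<noteq> m'"
    using leg_out[OF e0s(2) assms(1)] by simp
  have "{b, m', m} \<in> E" using assms(1) by (simp add: insert_commute)
  thus ?thesis using o inN[OF assms(1)] inN[of b m' m] by blast
qed

lemma crown3:
  assumes v: "v \<in> N b" "v \<notin> N a" and f: "{v, ph v, r} \<in> E" and r: "r \<noteq> a" "r \<noteq> b" "r \<noteq> c"
  shows False
proof -
  have tva: "tu v \<in> N a" using A3[OF v] by blast
  have body: "{b, ph v, tu v} \<in> E" using X(1)[OF P(1)[OF v(1)]] P(2)[OF v(1)] by simp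
  have lega: "{tu v, a, sg v} \<in> E" using XA(1)[OF tva] P8[OF v] by (simp add: insert_commute)
  have legf: "{ph v, v, r} \<in> E" using f by (simp add: insert_commute)
  have fd: "v \<noteq> ph v" "v \<noteq> r" "ph v \<noteq> r" using edist[OF f] by auto
  have fo: "a \<notin> {v, ph v, r}" "b \<notin> {v, ph v, r}" "c \<notin> {v, ph v, r}"
    using r X(8-10)[OF v(1)] X(8-10)[OF P(1)[OF v(1)]] by auto
  have rs: "r \<noteq> sg v" "r \<noteq> tu v" using np[OF f fo v(1), of r] by auto
  obtain m m' where m: "{b, m, m'} \<in> E" "{b, m, m'} \<notin> {{a, b, c}, {b, ph v, tu v}}" "m \<notin> {v, r}" "m' \<notin> {v, r}"
  proof (rule getleg[of "{{a, b, c}, {b, ph v, tu v}}" "{v, r}" b])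
    show "card {{a, b, c}, {b, ph v, tu v}} + card {v, r} < degree E b"
      using db card2le[of v r] card2le[of "{a, b, c}" "{b, ph v, tu v}"] by simp
  qed (use r X(9)[OF v(1)] in auto)
  have mo: "m \<noteq> a \<and> m \<noteq> b \<and> m \<noteq> c \<and> m' \<noteq> a \<and> m' \<noteq> b \<and> m' \<noteq> c \<and> m \<noteq> m' \<and> m \<in> N b \<and> m' \<in> N b"
    using bleg[OF m(1)] m(2) by simp
  have ne: "{b, m, m'} \<noteq> {b, ph v, tu v}" using m(2) by simp
  have mb: "m \<noteq> ph v" "m' \<noteq> ph v" "m \<noteq> tu v" "m' \<noteq> tu v"
    using lin[OF m(1) body, of b m] lin[OF m(1) body, of b m'] ne mo by auto
  have ms: "m \<noteq> sg v" "m' \<noteq> sg v"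
  proof -
    show "m \<noteq> sg v"
    proof
      assume "m = sg v"
      hence "{b, m, m'} = {b, v, sg v}" using lin[OF m(1) X(1)[OF v(1)], of b m] mo by auto
      hence "v \<in> {b, m, m'}" by blast
      thus False using m(3,4) X(9)[OF v(1)] by auto
    qed
    show "m' \<noteq> sg v"
    proof
      assume "m' = sg v"
      hence "{b, m, m'} = {b, v, sg v}" using lin[OF m(1) X(1)[OF v(1)], of b m'] mo by auto
      hence "v \<in> {b, m, m'}" by blast
      thus False using m(3,4) X(9)[OF v(1)] by auto
    qed
  qed
  have "distinct [b, ph v, tu v, m, m', v, r, a, sg v]"
    using fd rs mo mb ms m(3,4) r X[OF v(1)] X(8-10)[OF P(1)[OF v(1)]] P(5-7)[OF v(1)] sgtu[OF v(1)] dab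
    by auto
  hence "has_crown V E" using crownI[of b "ph v" "tu v" m m' v r a "sg v" E V] body m(1) legf lega by blast
  thus False using nc by blast
qed

lemma crown1:
  assumes u: "u \<in> N b" and f: "{u, s, t} \<in> E" and s: "s \<notin> N b" and t: "t \<noteq> ph u"
    and so: "s \<noteq> a" "s \<noteq> b" "s \<noteq> c" and tt: "t \<noteq> a" "t \<noteq> b" "t \<noteq> c"
  shows False
proof -
  have body: "{b, u, sg u} \<in> E" using X(1)[OF u] .
  have legc: "{sg u, c, ph u} \<in> E" using X(12)[OF X(2)[OF u]] unfolding ph_def by (simp add: insert_commute)
  have fd: "u \<noteq> s" "u \<noteq> t" "s \<noteq> t" using edist[OF f] by auto
  have fo: "a \<notin> {u, s, t}" "b \<notin> {u, s, t}" "c \<notin> {u, s, t}"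
    using so tt X(8-10)[OF u] by auto
  have ts: "t \<noteq> sg u" using np[OF f fo u, of t] by auto
  obtain m m' where m: "{b, m, m'} \<in> E" "{b, m, m'} \<notin> {{a, b, c}, {b, u, sg u}}" "m \<notin> {t, ph u}" "m' \<notin> {t, ph u}"
  proof (rule getleg[of "{{a, b, c}, {b, u, sg u}}" "{t, ph u}" b])
    show "card {{a, b, c}, {b, u, sg u}} + card {t, ph u} < degree E b"
      using db card2le[of t "ph u"] card2le[of "{a, b, c}" "{b, u, sg u}"] by simp
  qed (use tt X(9)[OF P(1)[OF u]] in auto)
  have mo: "m \<noteq> a \<and> m \<noteq> b \<and> m \<noteq> c \<and> m' \<noteq> a \<and> m' \<noteq> b \<and> m' \<noteq> c \<and> m \<noteq> m' \<and> m \<in> N b \<and> m' \<in> N b"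
    using bleg[OF m(1)] m(2) by simp
  have ne: "{b, m, m'} \<noteq> {b, u, sg u}" using m(2) by simp
  have mb: "m \<noteq> u" "m' \<noteq> u" "m \<noteq> sg u" "m' \<noteq> sg u"
    using lin[OF m(1) body, of b m] lin[OF m(1) body, of b m'] ne mo by auto
  have sn: "s \<noteq> m" "s \<noteq> m'" "s \<noteq> sg u" "s \<noteq> ph u" using s mo X(2)[OF u] P(1)[OF u] by auto
  have "distinct [b, u, sg u, m, m', s, t, c, ph u]"
    using fd ts t mo mb sn m(3,4) so tt X[OF u] X(8-10)[OF P(1)[OF u]] P(5-7)[OF u] dbc
    by auto
  hence "has_crown V E" using crownI[of b u "sg u" m m' s t c "ph u" E V] body m(1) f legc by blast
  thus False using nc by blast
qed

end


context D
begin

lemma sw_sg: "x \<in> N b \<Longrightarrow> sg x = y \<Longrightarrow> x = sg y" using X(3) by metis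
lemma sw_tu: "x \<in> N b \<Longrightarrow> tu x = y \<Longrightarrow> x = tu y" using X(15) by metis
lemma sw_ph: "x \<in> N b \<Longrightarrow> ph x = y \<Longrightarrow> x = ph y" using P(4) by metis

lemma block:
  assumes u: "u \<in> N b" and s: "s \<in> N b" and t: "t \<in> N b" and f: "{u, s, t} \<in> E"
    and su: "s \<noteq> ph u" and tu': "t \<noteq> ph u"
  shows "t = ph s"
proof -
  have fo: "a \<notin> {u, s, t}" "b \<notin> {u, s, t}" "c \<notin> {u, s, t}"
    using X(8-10)[OF u] X(8-10)[OF s] X(8-10)[OF t] by auto
  have fd: "u \<noteq> s" "u \<noteq> t" "s \<noteq> t" using edist[OF f] by auto
  have n1: "s \<noteq> sg u" "s \<noteq> tu u" "t \<noteq> sg u" "t \<noteq> tu u" using np[OF f fo u] by auto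
  have n2: "t \<noteq> sg s" "t \<noteq> tu s" using np[OF f fo s] by auto
  have c1: "sg s \<noteq> u" "sg s \<noteq> sg u" "sg s \<noteq> tu u" "sg s \<noteq> ph u"
    using sw_sg[OF s] X(3)[OF u] P(2,10)[OF u] n1 fd su by metis+
  have c2: "tu s \<noteq> u" "tu s \<noteq> sg u" "tu s \<noteq> tu u" "tu s \<noteq> ph u"
    using sw_tu[OF s] X(15)[OF u] P(3)[OF u] n1 fd su unfolding ph_def by metis+
  have c3: "ph s \<noteq> u" "ph s \<noteq> sg u" "ph s \<noteq> tu u" "ph s \<noteq> ph u"
    using sw_ph[OF s] P(4,8,9)[OF u] n1 fd su by metis+
  have du: "u \<noteq> sg u" "u \<noteq> tu u" "u \<noteq> ph u" "sg u \<noteq> tu u" "sg u \<noteq> ph u" "tu u \<noteq> ph u"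
    using X(4,16)[OF u] P(5-7)[OF u] sgtu[OF u] by auto
  have ds: "s \<noteq> sg s" "s \<noteq> tu s" "s \<noteq> ph s" "sg s \<noteq> tu s" "sg s \<noteq> ph s" "tu s \<noteq> ph s"
    using X(4,16)[OF s] P(5-7)[OF s] sgtu[OF s] by auto
  have ob: "u \<noteq> b" "sg u \<noteq> b" "tu u \<noteq> b" "ph u \<noteq> b" "s \<noteq> b" "sg s \<noteq> b" "tu s \<noteq> b" "ph s \<noteq> b"
    using X(9)[OF u] X(6,18)[OF u] X(9)[OF P(1)[OF u]] X(9)[OF s] X(6,18)[OF s] X(9)[OF P(1)[OF s]] by auto
  have oa: "u \<noteq> a" "tu u \<noteq> a" "s \<noteq> a" "tu s \<noteq> a" "u \<noteq> c" "tu u \<noteq> c" "s \<noteq> c" "tu s \<noteq> c"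
    using X(8,10,17,19)[OF u] X(8,10,17,19)[OF s] by auto
  define E1 where "E1 = {b, u, sg u}"
  define E2 where "E2 = {b, tu u, ph u}"
  define E3 where "E3 = {b, s, sg s}"
  define E4 where "E4 = {b, tu s, ph s}"
  have inE: "E1 \<in> E" "E2 \<in> E" "E3 \<in> E" "E4 \<in> E"
    unfolding E1_def E2_def E3_def E4_def
    using X(1)[OF u] X(1)[OF X(14)[OF u]] P(10)[OF u] X(1)[OF s] X(1)[OF X(14)[OF s]] P(10)[OF s] by auto
  have ne: "{a, b, c} \<noteq> E1" "{a, b, c} \<noteq> E2" "{a, b, c} \<noteq> E3" "{a, b, c} \<noteq> E4"
    "E1 \<noteq> E2" "E1 \<noteq> E3" "E1 \<noteq> E4" "E2 \<noteq> E3" "E2 \<noteq> E4" "E3 \<noteq> E4"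
  proof -
    show "{a, b, c} \<noteq> E1" using neq_edge[of u E1 "{a, b, c}"] oa ob unfolding E1_def by auto
    show "{a, b, c} \<noteq> E2" using neq_edge[of "tu u" E2 "{a, b, c}"] oa ob unfolding E2_def by auto
    show "{a, b, c} \<noteq> E3" using neq_edge[of s E3 "{a, b, c}"] oa ob unfolding E3_def by auto
    show "{a, b, c} \<noteq> E4" using neq_edge[of "tu s" E4 "{a, b, c}"] oa ob unfolding E4_def by auto
    show "E1 \<noteq> E2" using neq_edge[of u E1 E2] du ob unfolding E1_def E2_def by auto
    show "E1 \<noteq> E3" using neq_edge[of u E1 E3] fd c1 ob unfolding E1_def E3_def by auto
    show "E1 \<noteq> E4" using neq_edge[of u E1 E4] c2 c3 ob unfolding E1_def E4_def by auto
    show "E2 \<noteq> E3" using neq_edge[of "tu u" E2 E3] n1 c1 ob unfolding E2_def E3_def by auto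
    show "E2 \<noteq> E4" using neq_edge[of "tu u" E2 E4] c2 c3 ob unfolding E2_def E4_def by auto
    show "E3 \<noteq> E4" using neq_edge[of s E3 E4] ds ob unfolding E3_def E4_def by auto
  qed
  have sub5: "{{a, b, c}, E1, E2, E3, E4} \<subseteq> {f \<in> E. b \<in> f}"
    using inE e0 unfolding E1_def E2_def E3_def E4_def by auto
  have c5: "card {{a, b, c}, E1, E2, E3, E4} = 5" using ne by simp
  have eq5: "{{a, b, c}, E1, E2, E3, E4} = {f \<in> E. b \<in> f}"
    using card_subset_eq[OF _ sub5] finE c5 db unfolding degree_def by simp
  have "{b, t, sg t} \<in> {f \<in> E. b \<in> f}" using X(1)[OF t] by simp
  hence "{b, t, sg t} \<in> {{a, b, c}, E1, E2, E3, E4}" using eq5 by simp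
  hence "t \<in> {a, b, c} \<or> t \<in> E1 \<or> t \<in> E2 \<or> t \<in> E3 \<or> t \<in> E4" by blast
  thus ?thesis using fo fd n1 n2 tu' unfolding E1_def E2_def E3_def E4_def by auto
qed

lemma closure:
  assumes u: "u \<in> N b" and f: "f \<in> E" "u \<in> f" and fo: "a \<notin> f" "b \<notin> f" "c \<notin> f"
  shows False
proof -
  obtain s t where st: "f = {u, s, t}" "u \<noteq> s" "u \<noteq> t" "s \<noteq> t" using decomp[OF f] by blast
  have so: "s \<noteq> a" "s \<noteq> b" "s \<noteq> c" "t \<noteq> a" "t \<noteq> b" "t \<noteq> c" using fo st(1) by auto
  have fE: "{u, s, t} \<in> E" using f st by simp
  have fE2: "{u, t, s} \<in> E" using fE by (simp add: insert_commute)
  show False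
  proof (cases "t = ph u")
    case True
    have "u \<notin> N a" using notA[OF f(1) fo(1) u f(2)] True st(1) by blast
    moreover have "{u, ph u, s} \<in> E" using fE True by (simp add: insert_commute)
    ultimately show False using crown3[OF u] so by blast
  next
    case tn: False
    show False
    proof (cases "s = ph u")
      case True
      have "u \<notin> N a" using notA[OF f(1) fo(1) u f(2)] True st(1) by blast
      moreover have "{u, ph u, t} \<in> E" using fE True by simp
      ultimately show False using crown3[OF u] so by blast
    next
      case sn: False
      show False
      proof (cases "s \<in> N b")
        case False thus False using crown1[OF u fE False tn] so by blast
      next
        case sb: True
        show False
        proof (cases "t \<in> N b")
          case False thus False using crown1[OF u fE2 False sn] so by blast
        next
          case tb: True
          have tp: "t = ph s" using block[OF u sb tb fE sn tn] .
          have "s \<notin> N a" using notA[OF f(1) fo(1) sb] tp st(1) by blast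
          moreover have "{s, ph s, u} \<in> E" using fE tp by (simp add: insert_commute)
          ultimately show False using crown3[OF sb] X(8-10)[OF u] by blast
        qed
      qed
    qed
  qed
qed

end


context D
begin

definition U where "U = {a, b, c} \<union> N b"

lemma meetU: assumes f: "f \<in> E" and m: "f \<inter> U \<noteq> {}" shows "a \<in> f \<or> b \<in> f \<or> c \<in> f"
proof (rule ccontr)
  assume n: "\<not> (a \<in> f \<or> b \<in> f \<or> c \<in> f)"
  then obtain u where "u \<in> f" "u \<in> N b" using m unfolding U_def by blast
  thus False using closure[OF \<open>u \<in> N b\<close> f] n by blast
qed

lemma abc_sub: assumes f: "f \<in> E" "z \<in> f" and z: "z = a \<or> z = b \<or> z = c" shows "f \<subseteq> U"
proof (cases "f = {a, b, c}")
  case True thus ?thesis unfolding U_def by blast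
next
  case False
  obtain x y where xy: "f = {z, x, y}" "z \<noteq> x" "z \<noteq> y" "x \<noteq> y" using decomp[OF f] by blast
  have f1: "{z, x, y} \<in> E" "{z, x, y} \<noteq> {a, b, c}" using f False xy by auto
  have f2: "{z, y, x} \<in> E" "{z, y, x} \<noteq> {a, b, c}" using f1 by (simp_all add: insert_commute)
  have "x \<in> N z" "y \<in> N z" using inN[OF f1(1)] out1[OF z f1] inN[OF f2(1)] out1[OF z f2] by auto
  hence "x \<in> N b" "y \<in> N b" using z NaNb NcNb by auto
  thus ?thesis using xy z unfolding U_def by auto
qed

lemma meet_sub: "f \<in> E \<Longrightarrow> f \<inter> U \<noteq> {} \<Longrightarrow> f \<subseteq> U"
  using meetU abc_sub by blast

lemma UV: "U \<subseteq> V"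
proof
  fix v assume "v \<in> U"
  then consider "v = a" | "v = b" | "v = c" | "v \<in> N b" unfolding U_def by blast
  thus "v \<in> V"
  proof cases
    case 4 thus ?thesis using X(1)[OF 4] sub by blast
  qed (use e0 sub in blast)+
qed

lemma cardU: "card U = 11"
proof -
  have "{a, b, c} \<inter> N b = {}" using X(8-10) by blast
  moreover have "card {a, b, c} = 3" using dab dac dbc by simp
  ultimately show ?thesis unfolding U_def using card_Un_disjoint[of "{a, b, c}" "N b"] finNb cardNb by simp
qed

lemma cardEU: assumes da5: "degree E a \<le> 5" shows "card {f \<in> E. f \<subseteq> U} \<le> 15"
proof -
  have "{f \<in> E. f \<subseteq> U} \<subseteq> {f \<in> E. a \<in> f} \<union> {f \<in> E. b \<in> f} \<union> {f \<in> E. c \<in> f}"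
  proof
    fix f assume "f \<in> {f \<in> E. f \<subseteq> U}"
    hence fU: "f \<in> E" "f \<subseteq> U" by auto
    have "card f = 3" using card3[OF fU(1)] .
    hence "f \<noteq> {}" by auto
    hence "f \<inter> U \<noteq> {}" using fU(2) by blast
    thus "f \<in> {f \<in> E. a \<in> f} \<union> {f \<in> E. b \<in> f} \<union> {f \<in> E. c \<in> f}" using meetU[OF fU(1)] fU(1) by blast
  qed
  hence "card {f \<in> E. f \<subseteq> U} \<le> card ({f \<in> E. a \<in> f} \<union> {f \<in> E. b \<in> f} \<union> {f \<in> E. c \<in> f})"
    using finE by (intro card_mono) auto
  also have "\<dots> \<le> card ({f \<in> E. a \<in> f} \<union> {f \<in> E. b \<in> f}) + card {f \<in> E. c \<in> f}" by (rule card_Un_le)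
  also have "\<dots> \<le> card {f \<in> E. a \<in> f} + card {f \<in> E. b \<in> f} + card {f \<in> E. c \<in> f}"
    using card_Un_le[of "{f \<in> E. a \<in> f}" "{f \<in> E. b \<in> f}"] by simp
  finally show ?thesis using da5 db dc unfolding degree_def by simp
qed

lemma degU: assumes da5: "degree E a \<le> 5" and v: "v \<in> U" shows "degree E v \<le> 5"
proof -
  consider "v = a" | "v = b" | "v = c" | "v \<in> N b" using v unfolding U_def by blast
  thus ?thesis
  proof cases
    case 4
    have sub1: "{f \<in> E. v \<in> f} \<subseteq> {f \<in> E. v \<in> f \<and> a \<in> f} \<union> {f \<in> E. v \<in> f \<and> b \<in> f} \<union> {f \<in> E. v \<in> f \<and> c \<in> f}"
    proof
      fix f assume "f \<in> {f \<in> E. v \<in> f}"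
      hence "f \<in> E" "v \<in> f" by auto
      moreover have "f \<inter> U \<noteq> {}" using \<open>v \<in> f\<close> v by blast
      ultimately show "f \<in> {f \<in> E. v \<in> f \<and> a \<in> f} \<union> {f \<in> E. v \<in> f \<and> b \<in> f} \<union> {f \<in> E. v \<in> f \<and> c \<in> f}"
        using meetU by blast
    qed
    have one: "card {f \<in> E. v \<in> f \<and> z \<in> f} \<le> 1" if "z \<noteq> v" for z
    proof -
      have "finite {f \<in> E. v \<in> f \<and> z \<in> f}" using finE by simp
      moreover have "\<forall>f1\<in>{f \<in> E. v \<in> f \<and> z \<in> f}. \<forall>f2\<in>{f \<in> E. v \<in> f \<and> z \<in> f}. f1 = f2"
      proof (intro ballI)
        fix f1 f2 assume "f1 \<in> {f \<in> E. v \<in> f \<and> z \<in> f}" "f2 \<in> {f \<in> E. v \<in> f \<and> z \<in> f}"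
        thus "f1 = f2" using lin[of f1 f2 v z] that by blast
      qed
      ultimately show ?thesis by (simp only: One_nat_def card_le_Suc0_iff_eq)
    qed
    have "degree E v \<le> card ({f \<in> E. v \<in> f \<and> a \<in> f} \<union> {f \<in> E. v \<in> f \<and> b \<in> f} \<union> {f \<in> E. v \<in> f \<and> c \<in> f})"
      unfolding degree_def using finE by (intro card_mono[OF _ sub1]) auto
    also have "\<dots> \<le> card ({f \<in> E. v \<in> f \<and> a \<in> f} \<union> {f \<in> E. v \<in> f \<and> b \<in> f}) + card {f \<in> E. v \<in> f \<and> c \<in> f}"
      by (rule card_Un_le)
    also have "\<dots> \<le> card {f \<in> E. v \<in> f \<and> a \<in> f} + card {f \<in> E. v \<in> f \<and> b \<in> f} + card {f \<in> E. v \<in> f \<and> c \<in> f}"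
      using card_Un_le[of "{f \<in> E. v \<in> f \<and> a \<in> f}" "{f \<in> E. v \<in> f \<and> b \<in> f}"] by simp
    also have "\<dots> \<le> 3" using one[of a] one[of b] one[of c] X(8-10)[OF 4] by fastforce
    finally show ?thesis by simp
  qed (use da5 db dc in simp_all)
qed

end


definition gw :: "nat \<Rightarrow> real" where "gw x = (if x < 6 then 1 / real x else 0)"

lemma gw_nonneg: "gw x \<ge> 0" unfolding gw_def by simp

lemma gw1: "x = 1 \<Longrightarrow> gw x = 1" unfolding gw_def by simp

lemma gw3: "1 \<le> x \<Longrightarrow> x \<le> 3 \<Longrightarrow> gw x \<ge> 1/3"
  unfolding gw_def by (simp add: field_simps)

lemma gw4: "x = 4 \<Longrightarrow> gw x = 1/4" unfolding gw_def by simp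

lemma gw5: "1 \<le> x \<Longrightarrow> x \<le> 5 \<Longrightarrow> gw x \<ge> 1/5"
  unfolding gw_def by (simp add: field_simps)

lemma num_aux:
  fixes x y z :: nat
  assumes pos: "x \<ge> 1" "y \<ge> 1" "z \<ge> 1"
    and big: "\<not> (x \<ge> 6 \<and> y \<ge> 4 \<and> z \<ge> 2)" "\<not> (x \<ge> 6 \<and> z \<ge> 4 \<and> y \<ge> 2)"
  and x6: "x \<ge> 6"
  shows "gw x + gw y + gw z \<ge> 2/3"
proof -
  have "gw x \<ge> 0" "gw y \<ge> 0" "gw z \<ge> 0" by (simp_all add: gw_nonneg)
  show ?thesis
  proof (cases "y = 1")
    case True thus ?thesis using gw1[OF True] \<open>gw x \<ge> 0\<close> \<open>gw z \<ge> 0\<close> by simp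
  next
    case y: False
    show ?thesis
    proof (cases "z = 1")
      case True thus ?thesis using gw1[OF True] \<open>gw x \<ge> 0\<close> \<open>gw y \<ge> 0\<close> by simp
    next
      case False
      hence "y \<le> 3" "z \<le> 3" using big x6 y pos by auto
      thus ?thesis using gw3[of y] gw3[of z] pos \<open>gw x \<ge> 0\<close> by simp
    qed
  qed
qed

lemma num:
  fixes x y z :: nat
  assumes pos: "x \<ge> 1" "y \<ge> 1" "z \<ge> 1"
    and big: "\<not> (x \<ge> 6 \<and> y \<ge> 4 \<and> z \<ge> 2)" "\<not> (x \<ge> 6 \<and> z \<ge> 4 \<and> y \<ge> 2)"
      "\<not> (y \<ge> 6 \<and> x \<ge> 4 \<and> z \<ge> 2)" "\<not> (y \<ge> 6 \<and> z \<ge> 4 \<and> x \<ge> 2)"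
      "\<not> (z \<ge> 6 \<and> x \<ge> 4 \<and> y \<ge> 2)" "\<not> (z \<ge> 6 \<and> y \<ge> 4 \<and> x \<ge> 2)"
    and nd: "\<not> (4 \<le> x \<and> x \<le> 5 \<and> y = 5 \<and> z = 5)" "\<not> (4 \<le> y \<and> y \<le> 5 \<and> x = 5 \<and> z = 5)"
      "\<not> (4 \<le> z \<and> z \<le> 5 \<and> x = 5 \<and> y = 5)"
  shows "gw x + gw y + gw z \<ge> 2/3"
proof (cases "x \<ge> 6")
  case True thus ?thesis using num_aux[OF pos big(1,2)] by simp
next
  case x: False
  show ?thesis
  proof (cases "y \<ge> 6")
    case True thus ?thesis using num_aux[OF pos(2,1,3) big(3,4)] by simp
  next
    case y: False
    show ?thesis
    proof (cases "z \<ge> 6")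
      case True thus ?thesis using num_aux[OF pos(3,1,2) big(5,6)] by simp
    next
      case z: False
      have b5: "gw x \<ge> 1/5" "gw y \<ge> 1/5" "gw z \<ge> 1/5" using gw5 pos x y z by simp_all
      show ?thesis
      proof (cases "x \<le> 3 \<or> y \<le> 3 \<or> z \<le> 3")
        case True
        thus ?thesis using gw3[of x] gw3[of y] gw3[of z] b5 pos by auto
      next
        case False
        hence "(x = 4 \<and> y = 4) \<or> (x = 4 \<and> z = 4) \<or> (y = 4 \<and> z = 4)" using nd x y z by auto
        thus ?thesis using gw4 b5 by auto
      qed
    qed
  qed
qed


context L
begin

lemma deg_pos: "f \<in> E \<Longrightarrow> v \<in> f \<Longrightarrow> degree E v \<ge> 1"
proof -
  assume "f \<in> E" "v \<in> f"
  hence "f \<in> {f \<in> E. v \<in> f}" by simp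
  moreover have "finite {f \<in> E. v \<in> f}" using finE by simp
  ultimately have "card {f \<in> E. v \<in> f} > 0" using card_gt_0_iff by blast
  thus ?thesis unfolding degree_def by simp
qed

end

context C
begin

lemma edge_weight:
  assumes nodef: "\<And>a b c. {a, b, c} \<in> E \<Longrightarrow> a \<noteq> b \<Longrightarrow> a \<noteq> c \<Longrightarrow> b \<noteq> c \<Longrightarrow>
      \<not> (degree E b = 5 \<and> degree E c = 5 \<and> 4 \<le> degree E a \<and> degree E a \<le> 5)"
    and e: "e \<in> E"
  shows "(\<Sum>v\<in>e. gw (degree E v)) \<ge> 2/3"
proof -
  have "card e = 3" using card3[OF e] .
  hence "e \<noteq> {}" by auto
  then obtain x where x: "x \<in> e" by blast
  obtain y z where yz: "e = {x, y, z}" "x \<noteq> y" "x \<noteq> z" "y \<noteq> z" using decomp[OF e x] by blast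
  have es: "{x, y, z} \<in> E" "{x, z, y} \<in> E" "{y, x, z} \<in> E" "{y, z, x} \<in> E" "{z, x, y} \<in> E" "{z, y, x} \<in> E"
    using e yz(1) by (simp_all add: insert_commute)
  have pos: "degree E x \<ge> 1" "degree E y \<ge> 1" "degree E z \<ge> 1" using deg_pos[OF e] yz(1) by auto
  have bg: "\<not> (degree E x \<ge> 6 \<and> degree E y \<ge> 4 \<and> degree E z \<ge> 2)"
    "\<not> (degree E x \<ge> 6 \<and> degree E z \<ge> 4 \<and> degree E y \<ge> 2)"
    "\<not> (degree E y \<ge> 6 \<and> degree E x \<ge> 4 \<and> degree E z \<ge> 2)"
    "\<not> (degree E y \<ge> 6 \<and> degree E z \<ge> 4 \<and> degree E x \<ge> 2)"
    "\<not> (degree E z \<ge> 6 \<and> degree E x \<ge> 4 \<and> degree E y \<ge> 2)"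
    "\<not> (degree E z \<ge> 6 \<and> degree E y \<ge> 4 \<and> degree E x \<ge> 2)"
    using big[OF es(1)] big[OF es(2)] big[OF es(3)] big[OF es(4)] big[OF es(5)] big[OF es(6)] yz(2-4)
    by auto
  have nd: "\<not> (4 \<le> degree E x \<and> degree E x \<le> 5 \<and> degree E y = 5 \<and> degree E z = 5)"
    "\<not> (4 \<le> degree E y \<and> degree E y \<le> 5 \<and> degree E x = 5 \<and> degree E z = 5)"
    "\<not> (4 \<le> degree E z \<and> degree E z \<le> 5 \<and> degree E x = 5 \<and> degree E y = 5)"
    using nodef[OF es(1)] nodef[OF es(3)] nodef[OF es(5)] yz(2-4) by auto
  have "(\<Sum>v\<in>e. gw (degree E v)) = gw (degree E x) + gw (degree E y) + gw (degree E z)"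
    using yz by simp
  thus ?thesis using num[OF pos bg nd] by simp
qed

lemma weighted:
  assumes nodef: "\<And>a b c. {a, b, c} \<in> E \<Longrightarrow> a \<noteq> b \<Longrightarrow> a \<noteq> c \<Longrightarrow> b \<noteq> c \<Longrightarrow>
      \<not> (degree E b = 5 \<and> degree E c = 5 \<and> 4 \<le> degree E a \<and> degree E a \<le> 5)"
  shows "real (card E) \<le> 3 * (real (card V) - real (card {v \<in> V. degree E v \<ge> 6})) / 2"
proof -
  define W where "W = {v \<in> V. degree E v < 6}"
  have VW: "{v \<in> V. degree E v \<ge> 6} = V - W" unfolding W_def by auto
  have cW: "card {v \<in> V. degree E v \<ge> 6} = card V - card W"
    unfolding VW using finV W_def by (intro card_Diff_subset) auto
  have WV: "card W \<le> card V" using finV unfolding W_def by (intro card_mono) auto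
  have "real (card E) * (2/3) = (\<Sum>e\<in>E. 2/3)" by simp
  also have "\<dots> \<le> (\<Sum>e\<in>E. \<Sum>v\<in>e. gw (degree E v))"
    using edge_weight[OF nodef] by (intro sum_mono) auto
  also have "\<dots> = (\<Sum>e\<in>E. \<Sum>v\<in>V. if v \<in> e then gw (degree E v) else 0)"
  proof (rule sum.cong)
    fix e assume "e \<in> E"
    hence "e \<subseteq> V" using sub by blast
    hence "e = V \<inter> e" by blast
    hence "(\<Sum>v\<in>e. gw (degree E v)) = (\<Sum>v\<in>V \<inter> e. gw (degree E v))" by simp
    also have "\<dots> = (\<Sum>v\<in>V. if v \<in> e then gw (degree E v) else 0)"
      using finV by (simp add: sum.inter_restrict)
    finally show "(\<Sum>v\<in>e. gw (degree E v)) = (\<Sum>v\<in>V. if v \<in> e then gw (degree E v) else 0)" .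
  qed simp
  also have "\<dots> = (\<Sum>v\<in>V. \<Sum>e\<in>E. if v \<in> e then gw (degree E v) else 0)" by (rule sum.swap)
  also have "\<dots> = (\<Sum>v\<in>V. real (degree E v) * gw (degree E v))"
  proof (rule sum.cong)
    fix v assume "v \<in> V"
    have "(\<Sum>e\<in>E. if v \<in> e then gw (degree E v) else 0) = (\<Sum>e\<in>{e \<in> E. v \<in> e}. gw (degree E v))"
      using sum.inter_filter[OF finE, of "\<lambda>e. gw (degree E v)" "\<lambda>e. v \<in> e"] by simp
    also have "\<dots> = real (degree E v) * gw (degree E v)" unfolding degree_def by simp
    finally show "(\<Sum>e\<in>E. if v \<in> e then gw (degree E v) else 0) = real (degree E v) * gw (degree E v)" .
  qed simp
  also have "\<dots> \<le> (\<Sum>v\<in>V. if v \<in> W then 1 else 0)"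
  proof (rule sum_mono)
    fix v assume v: "v \<in> V"
    show "real (degree E v) * gw (degree E v) \<le> (if v \<in> W then 1 else 0)"
      unfolding gw_def W_def using v by auto
  qed
  also have "\<dots> = real (card (V \<inter> W))"
    using finV by (simp add: sum.If_cases)
  also have "V \<inter> W = W" unfolding W_def by blast
  finally have "real (card E) * (2/3) \<le> real (card W)" .
  thus ?thesis using cW WV by (simp add: of_nat_diff)
qed

end


lemma crown_mono: "has_crown V' E' \<Longrightarrow> E' \<subseteq> E \<Longrightarrow> has_crown V E"
  unfolding has_crown_def by blast

lemma main_ind:
  "\<forall>(V::'a set) E. card E = n \<longrightarrow> linear_3graph V E \<longrightarrow> \<not> has_crown V E \<longrightarrow>
     real (card E) \<le> 3 * (real (card V) - real (card {v \<in> V. degree E v \<ge> 6})) / 2"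
proof (induction n rule: less_induct)
  case (less n)
  show ?case
  proof (intro allI impI)
    fix V :: "'a set" and E
    assume cE: "card E = n" and lg: "linear_3graph V E" and ncr: "\<not> has_crown V E"
    interpret C V E using lg ncr by (unfold_locales) auto
    show "real (card E) \<le> 3 * (real (card V) - real (card {v \<in> V. degree E v \<ge> 6})) / 2"
    proof (cases "\<exists>a b c. {a, b, c} \<in> E \<and> a \<noteq> b \<and> a \<noteq> c \<and> b \<noteq> c \<and>
        degree E b = 5 \<and> degree E c = 5 \<and> 4 \<le> degree E a \<and> degree E a \<le> 5")
      case False
      thus ?thesis using weighted by blast
    next
      case True
      then obtain a b c where abc: "{a, b, c} \<in> E" "a \<noteq> b" "a \<noteq> c" "b \<noteq> c"
        "degree E b = 5" "degree E c = 5" "4 \<le> degree E a" "degree E a \<le> 5" by blast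
      interpret D V E a b c using abc by (unfold_locales) auto
      define V2 where "V2 = V - U"
      define E2 where "E2 = {f \<in> E. f \<inter> U = {}}"
      define EU where "EU = {f \<in> E. f \<subseteq> U}"
      have E2sub: "E2 \<subseteq> E" unfolding E2_def by blast
      have lg2: "linear_3graph V2 E2"
        unfolding linear_3graph_def
      proof (intro conjI ballI impI)
        show "finite V2" unfolding V2_def using finV by simp
      next
        fix e assume "e \<in> E2"
        thus "e \<subseteq> V2" unfolding V2_def E2_def using sub by blast
      next
        fix e assume "e \<in> E2"
        thus "card e = 3" unfolding E2_def using card3 by blast
      next
        fix e f assume "e \<in> E2" "f \<in> E2" "e \<noteq> f"
        thus "card (e \<inter> f) \<le> 1" using lg E2sub unfolding linear_3graph_def by blast
      qed
      have nc2: "\<not> has_crown V2 E2" using crown_mono[OF _ E2sub] ncr by blast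
      have e0n: "{a, b, c} \<notin> E2" unfolding E2_def U_def by blast
      have lt: "card E2 < n" using cE abc(1) e0n E2sub finE by (metis psubset_card_mono psubsetI)
      have IH: "real (card E2) \<le> 3 * (real (card V2) - real (card {v \<in> V2. degree E2 v \<ge> 6})) / 2"
        using less.IH[OF lt] lg2 nc2 by blast
      have Eun: "E = EU \<union> E2"
        unfolding EU_def E2_def using meet_sub by blast
      have Edis: "EU \<inter> E2 = {}"
      proof (rule ccontr)
        assume "EU \<inter> E2 \<noteq> {}"
        then obtain f where f: "f \<in> E" "f \<subseteq> U" "f \<inter> U = {}" unfolding EU_def E2_def by blast
        hence "f = {}" by blast
        thus False using card3[OF f(1)] by simp
      qed
      have cEsum: "card E = card EU + card E2"
        using card_Un_disjoint[of EU E2] Eun Edis finE finite_subset[OF E2sub finE]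
        unfolding EU_def by (metis (no_types, lifting) Eun finite_Un)
      have degeq: "degree E2 v = degree E v" if "v \<in> V2" for v
      proof -
        have "{f \<in> E2. v \<in> f} = {f \<in> E. v \<in> f}"
        proof
          show "{f \<in> E2. v \<in> f} \<subseteq> {f \<in> E. v \<in> f}" using E2sub by blast
        next
          show "{f \<in> E. v \<in> f} \<subseteq> {f \<in> E2. v \<in> f}"
          proof
            fix f assume f: "f \<in> {f \<in> E. v \<in> f}"
            have "f \<inter> U = {}"
            proof (rule ccontr)
              assume "f \<inter> U \<noteq> {}"
              hence "f \<subseteq> U" using meet_sub f by blast
              thus False using f that unfolding V2_def by blast
            qed
            thus "f \<in> {f \<in> E2. v \<in> f}" using f unfolding E2_def by blast
          qed
        qed
        thus ?thesis unfolding degree_def by simp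
      qed
      have Seq: "{v \<in> V. degree E v \<ge> 6} = {v \<in> V2. degree E2 v \<ge> 6}"
      proof
        show "{v \<in> V. degree E v \<ge> 6} \<subseteq> {v \<in> V2. degree E2 v \<ge> 6}"
        proof
          fix v assume v: "v \<in> {v \<in> V. degree E v \<ge> 6}"
          hence "v \<notin> U" using degU[OF abc(8)] by fastforce
          hence "v \<in> V2" using v unfolding V2_def by blast
          thus "v \<in> {v \<in> V2. degree E2 v \<ge> 6}" using v degeq by simp
        qed
      next
        show "{v \<in> V2. degree E2 v \<ge> 6} \<subseteq> {v \<in> V. degree E v \<ge> 6}"
          using degeq unfolding V2_def by auto
      qed
      have cV: "card V = card U + card V2"
        unfolding V2_def using card_Diff_subset[OF _ UV] card_mono[OF finV UV] finite_subset[OF UV finV]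
        by simp
      have cEU: "card EU \<le> 15" unfolding EU_def using cardEU[OF abc(8)] .
      have "real (card E) = real (card EU) + real (card E2)" using cEsum by simp
      thus ?thesis using IH cEU cV cardU Seq by simp
    qed
  qed
qed

theorem theorem1p1:
  fixes V :: "'a set" and E :: "'a set set"
  assumes "linear_3graph V E"
    and "crown_free V E"
  shows "real (card E) \<le> 3 * (real (card V) - real (card {v \<in> V. degree E v \<ge> 6})) / 2"
  using main_ind[of "card E"] assms unfolding crown_free_def by blast

end
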